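(* Let $n=sk+r$ with integers $s\geq 2$, $k\geq 3$ and $1\leq r\leq k-1$. Then $t_2(n,k)\geq \chi(\overline{K}(n,k))$ in each of the following cases: (a) $k\geq 4$ and $s\geq 7$; (b) $k=3$ and $s\geq 17$; (c) $k\geq 7$ and $s=6$.
   Context: $\overline{K}(n,k)$ is the complement of the Kneser graph: its vertices are the $k$-element subsets of $[n]$, two distinct ones adjacent iff they intersect. $\chi$ is chromatic number. With $l=\lceil \frac{n-1}{2(k-1)}\rceil$, define $$t_2(n,k)=\sum_{i=1}^{\lceil n/2\rceil}\left\lfloor \frac{1}{l+1}\binom{n-i}{k-1}\right\rfloor.$$ *)

theory Defs
  imports Complex_Main
begin

definition kneser_vertices :: "nat \<Rightarrow> nat \<Rightarrow> nat set set" where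
  "kneser_vertices n k = {A. A \<subseteq> {1..n} \<and> card A = k}"

definition compl_kneser_adj :: "nat set \<Rightarrow> nat set \<Rightarrow> bool" where
  "compl_kneser_adj A B \<longleftrightarrow> A \<noteq> B \<and> A \<inter> B \<noteq> {}"

definition proper_colouring :: "nat \<Rightarrow> nat \<Rightarrow> nat \<Rightarrow> (nat set \<Rightarrow> nat) \<Rightarrow> bool" where
  "proper_colouring n k c f \<longleftrightarrow>
     (\<forall>A\<in>kneser_vertices n k. f A < c) \<and>
     (\<forall>A\<in>kneser_vertices n k. \<forall>B\<in>kneser_vertices n k.
        compl_kneser_adj A B \<longrightarrow> f A \<noteq> f B)"

definition chi_compl_kneser :: "nat \<Rightarrow> nat \<Rightarrow> nat" where
  "chi_compl_kneser n k = (LEAST c. \<exists>f. proper_colouring n k c f)"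

definition t2 :: "nat \<Rightarrow> nat \<Rightarrow> nat" where
  "t2 n k = (let l = nat \<lceil>(real n - 1) / (2 * (real k - 1))\<rceil>
             in \<Sum>i=1..nat \<lceil>real n / 2\<rceil>. ((n - i) choose (k - 1)) div (l + 1))"

end

theory Submission
  imports Defs
begin

lemma cycle_exists:
  fixes F :: "'p set" and r :: "'p \<Rightarrow> 'a" and c :: "'p \<Rightarrow> 'b"
  assumes fin: "finite F" and ne: "F \<noteq> {}"
    and dr: "\<forall>p\<in>F. \<exists>q\<in>F. q \<noteq> p \<and> r q = r p"
    and dc: "\<forall>p\<in>F. \<exists>q\<in>F. q \<noteq> p \<and> c q = c p"
  shows "\<exists>\<delta>::'p \<Rightarrow> real. (\<forall>p. \<delta> p \<noteq> 0 \<longrightarrow> p \<in> F) \<and> (\<forall>p. \<delta> p = 0 \<or> \<delta> p = 1 \<or> \<delta> p = -1)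
     \<and> (\<exists>p. \<delta> p \<noteq> 0) \<and> (\<forall>i. (\<Sum>p\<in>{p\<in>F. r p = i}. \<delta> p) = 0)
     \<and> (\<forall>j. (\<Sum>p\<in>{p\<in>F. c p = j}. \<delta> p) = 0)"
proof -
  obtain p0 where p0: "p0 \<in> F" using ne by blast
  define nr where "nr q = (SOME q'. q' \<in> F \<and> q' \<noteq> q \<and> r q' = r q)" for q
  define nc where "nc q = (SOME q'. q' \<in> F \<and> q' \<noteq> q \<and> c q' = c q)" for q
  have nr: "nr q \<in> F \<and> nr q \<noteq> q \<and> r (nr q) = r q" if "q \<in> F" for q
    unfolding nr_def by (rule someI_ex) (use dr that in blast)
  have nc: "nc q \<in> F \<and> nc q \<noteq> q \<and> c (nc q) = c q" if "q \<in> F" for q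
    unfolding nc_def by (rule someI_ex) (use dc that in blast)
  define e where "e = rec_nat p0 (\<lambda>j q. if even j then nc q else nr q)"
  have e0: "e 0 = p0" by (simp add: e_def)
  have eS: "e (Suc j) = (if even j then nc (e j) else nr (e j))" for j by (simp add: e_def)
  have eF: "e j \<in> F" for j
    by (induction j) (auto simp: e0 eS p0 nr nc)
  have eneq: "e (Suc j) \<noteq> e j" for j using nr[OF eF] nc[OF eF] by (simp add: eS)
  have ec: "even j \<Longrightarrow> c (e (Suc j)) = c (e j)" for j using nc[OF eF] by (simp add: eS)
  have er: "odd j \<Longrightarrow> r (e (Suc j)) = r (e j)" for j using nr[OF eF] by (simp add: eS)
  define v where "v j = (if even j then Inl (r (e j)) else Inr (c (e j)))" for j
  define V where "V = Inl ` r ` F \<union> Inr ` c ` F"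
  have finV: "finite V" using fin by (simp add: V_def)
  have vV: "v j \<in> V" for j using eF[of j] by (auto simp: v_def V_def)
  have "\<not> inj_on v {..card V}"
  proof
    assume "inj_on v {..card V}"
    then have "card (v ` {..card V}) = Suc (card V)" by (simp add: card_image)
    moreover have "card (v ` {..card V}) \<le> card V"
      using vV finV by (intro card_mono) auto
    ultimately show False by simp
  qed
  then obtain a1 b1 where ab1: "a1 \<noteq> b1" "v a1 = v b1" unfolding inj_on_def by blast
  have ex: "\<exists>b. \<exists>a<b. v a = v b"
  proof (cases "a1 < b1")
    case True then show ?thesis using ab1 by blast
  next
    case False then have "b1 < a1" using ab1 by simp
    then show ?thesis using ab1 by metis
  qed
  define b where "b = (LEAST b. \<exists>a<b. v a = v b)"
  have "\<exists>a<b. v a = v b" unfolding b_def by (rule LeastI_ex[OF ex])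
  then obtain a where ab: "a < b" "v a = v b" by blast
  have minb: "v a' \<noteq> v b'" if "a' < b'" "b' < b" for a' b'
  proof
    assume "v a' = v b'"
    then have "b \<le> b'" unfolding b_def using that(1) by (intro Least_le) blast
    with that show False by simp
  qed
  have par: "even a = even b" using ab(2) by (auto simp: v_def split: if_splits)
  have inj: "inj_on e {a..<b}"
  proof (rule inj_onI, rule ccontr)
    fix j j' assume j: "j \<in> {a..<b}" "j' \<in> {a..<b}" "e j = e j'" "j \<noteq> j'"
    have key: "False" if "j < j'" "j' < b" "e j = e j'" for j j'
    proof (cases "even j = even j'")
      case True
      then have "v j = v j'" using that(3) by (simp add: v_def)
      then show False using minb that by blast
    next
      case False
      have "v (Suc j) = v j'"
        using False that(3) ec[of j] er[of j] by (auto simp: v_def)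
      show False
      proof (cases "Suc j = j'")
        case True then show ?thesis using eneq[of j] that(3) by simp
      next
        case False
        then have "Suc j < j'" using that by simp
        then show ?thesis using minb \<open>v (Suc j) = v j'\<close> that by blast
      qed
    qed
    show False
    proof (cases "j < j'")
      case True then show ?thesis using key j by auto
    next
      case False then have "j' < j" using j by simp
      then show ?thesis using key[of j' j] j by auto
    qed
  qed
  define \<delta> where "\<delta> q = (\<Sum>j\<in>{a..<b}. (-1)^j * (if e j = q then 1 else 0 :: real))" for q
  have \<delta>_in: "\<delta> q = (-1)^j" if "j \<in> {a..<b}" "e j = q" for q j
  proof -
    have "\<delta> q = (\<Sum>j'\<in>{a..<b}. if j' = j then (-1)^j' else 0)"
      unfolding \<delta>_def
      by (rule sum.cong) (use inj that in \<open>auto simp: inj_on_def\<close>)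
    also have "\<dots> = (-1)^j" using that by simp
    finally show ?thesis .
  qed
  have \<delta>_out: "\<delta> q = 0" if "q \<notin> e ` {a..<b}" for q
    unfolding \<delta>_def by (rule sum.neutral) (use that in auto)
  have P1: "\<forall>p. \<delta> p \<noteq> 0 \<longrightarrow> p \<in> F"
  proof (intro allI impI)
    fix p assume "\<delta> p \<noteq> 0"
    then have "p \<in> e ` {a..<b}" using \<delta>_out by blast
    then show "p \<in> F" using eF by blast
  qed
  have P2: "\<forall>p. \<delta> p = 0 \<or> \<delta> p = 1 \<or> \<delta> p = -1"
  proof
    fix p show "\<delta> p = 0 \<or> \<delta> p = 1 \<or> \<delta> p = -1"
    proof (cases "p \<in> e ` {a..<b}")
      case True
      then obtain j where "j \<in> {a..<b}" "e j = p" by blast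
      then show ?thesis using \<delta>_in by (cases "even j") auto
    qed (simp add: \<delta>_out)
  qed
  have P3: "\<exists>p. \<delta> p \<noteq> 0"
  proof
    show "\<delta> (e a) \<noteq> 0" using \<delta>_in[of a "e a"] ab(1) by simp
  qed
  have swap: "(\<Sum>p\<in>{p\<in>F. Q p}. \<delta> p) = (\<Sum>j\<in>{a..<b}. (-1)^j * (if Q (e j) then 1 else 0))" for Q
  proof -
    have "(\<Sum>p\<in>{p\<in>F. Q p}. \<delta> p)
        = (\<Sum>j\<in>{a..<b}. (-1)^j * (\<Sum>p\<in>{p\<in>F. Q p}. (if e j = p then 1 else 0 :: real)))"
      unfolding \<delta>_def by (simp add: sum.swap[of _ "{a..<b}"] sum_distrib_left)
    also have "\<dots> = (\<Sum>j\<in>{a..<b}. (-1)^j * (if Q (e j) then 1 else 0))"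
      using fin eF by (intro sum.cong refl) (simp add: sum.delta)
    finally show ?thesis .
  qed
  have tele: "(\<Sum>j\<in>{a..<b}. (-1)^j * (R j + R (Suc j))) = (0::real)"
    if "R a = R b" for R :: "nat \<Rightarrow> real"
  proof -
    have "(\<Sum>j\<in>{a..<b}. (-1)^j * (R j + R (Suc j)))
        = - (\<Sum>j\<in>{a..<b}. (-1)^(Suc j) * R (Suc j) - (-1)^j * R j)"
      by (simp add: sum_negf[symmetric] algebra_simps)
    also have "\<dots> = - ((-1)^b * R b - (-1)^a * R a)"
      using ab(1) by (subst sum_Suc_diff') auto
    also have "\<dots> = 0" using that par by (simp add: minus_one_power_iff)
    finally show ?thesis .
  qed
  have P4: "\<forall>i. (\<Sum>p\<in>{p\<in>F. r p = i}. \<delta> p) = 0"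
  proof
    fix i
    define R where "R j = (if v j = Inl i then 1 else 0 :: real)" for j
    have "(if r (e j) = i then 1 else 0) = R j + R (Suc j)" for j
      using er[of j] by (cases "even j") (auto simp: R_def v_def)
    then show "(\<Sum>p\<in>{p\<in>F. r p = i}. \<delta> p) = 0"
      unfolding swap using tele[of R] ab(2) by (simp add: R_def)
  qed
  have P5: "\<forall>i. (\<Sum>p\<in>{p\<in>F. c p = i}. \<delta> p) = 0"
  proof
    fix i
    define R where "R j = (if v j = Inr i then 1 else 0 :: real)" for j
    have "(if c (e j) = i then 1 else 0) = R j + R (Suc j)" for j
      using ec[of j] by (cases "even j") (auto simp: R_def v_def)
    then show "(\<Sum>p\<in>{p\<in>F. c p = i}. \<delta> p) = 0"
      unfolding swap using tele[of R] ab(2) by (simp add: R_def)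
  qed
  show ?thesis using P1 P2 P3 P4 P5 by blast
qed

lemma frac_deg:
  fixes x :: "'p \<Rightarrow> real" and \<kappa> :: "'p \<Rightarrow> 'a"
  assumes fin: "finite P" and p: "p \<in> P" "0 < x p" "x p < 1"
    and bnd: "\<forall>q\<in>P. 0 \<le> x q \<and> x q \<le> 1"
    and int: "(\<Sum>q\<in>{q\<in>P. \<kappa> q = \<kappa> p}. x q) \<in> \<int>"
  shows "\<exists>q\<in>P. q \<noteq> p \<and> \<kappa> q = \<kappa> p \<and> 0 < x q \<and> x q < 1"
proof (rule ccontr)
  assume H: "\<not> ?thesis"
  let ?A = "{q\<in>P. \<kappa> q = \<kappa> p}"
  have "(\<Sum>q\<in>?A. x q) = x p + (\<Sum>q\<in>?A - {p}. x q)"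
    using fin p by (subst sum.remove[of _ p]) auto
  then have xp: "x p = (\<Sum>q\<in>?A. x q) - (\<Sum>q\<in>?A - {p}. x q)" by simp
  have "(\<Sum>q\<in>?A - {p}. x q) \<in> \<int>"
  proof (rule Ints_sum)
    fix q assume q: "q \<in> ?A - {p}"
    then have "\<not> (0 < x q \<and> x q < 1)" using H by auto
    moreover have "0 \<le> x q \<and> x q \<le> 1" using q bnd by auto
    ultimately have "x q = 0 \<or> x q = 1" by auto
    then show "x q \<in> \<int>" by auto
  qed
  then have "x p \<in> \<int>" unfolding xp using int by (intro Ints_diff)
  then obtain z where "x p = of_int z" by (auto elim: Ints_cases)
  with p show False by simp
qed

lemma round01_aux:
  fixes P :: "'p set" and r :: "'p \<Rightarrow> 'a" and c :: "'p \<Rightarrow> 'b"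
  assumes fin: "finite P"
  shows "\<forall>x::'p \<Rightarrow> real. card {p\<in>P. 0 < x p \<and> x p < 1} = N \<longrightarrow> (\<forall>p\<in>P. 0 \<le> x p \<and> x p \<le> 1) \<longrightarrow>
    (\<forall>i. (\<Sum>p\<in>{p\<in>P. r p = i}. x p) \<in> \<int>) \<longrightarrow> (\<forall>j. (\<Sum>p\<in>{p\<in>P. c p = j}. x p) \<in> \<int>) \<longrightarrow>
    (\<exists>g. (\<forall>p\<in>P. g p = 0 \<or> g p = 1) \<and> (\<forall>p\<in>P. x p = 0 \<longrightarrow> g p = 0)
     \<and> (\<forall>p\<in>P. x p = 1 \<longrightarrow> g p = 1)
     \<and> (\<forall>i. (\<Sum>p\<in>{p\<in>P. r p = i}. g p) = (\<Sum>p\<in>{p\<in>P. r p = i}. x p))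
     \<and> (\<forall>j. (\<Sum>p\<in>{p\<in>P. c p = j}. g p) = (\<Sum>p\<in>{p\<in>P. c p = j}. x p)))"
proof (induction N rule: less_induct)
  case (less N)
  show ?case
  proof (intro allI impI)
  fix x :: "'p \<Rightarrow> real"
  assume cardN: "card {p\<in>P. 0 < x p \<and> x p < 1} = N" and bnd: "\<forall>p\<in>P. 0 \<le> x p \<and> x p \<le> 1"
    and ir: "\<forall>i. (\<Sum>p\<in>{p\<in>P. r p = i}. x p) \<in> \<int>" and ic: "\<forall>j. (\<Sum>p\<in>{p\<in>P. c p = j}. x p) \<in> \<int>"
  define Fr where "Fr = {p\<in>P. 0 < x p \<and> x p < 1}"
  show "\<exists>g. (\<forall>p\<in>P. g p = 0 \<or> g p = 1) \<and> (\<forall>p\<in>P. x p = 0 \<longrightarrow> g p = 0)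
     \<and> (\<forall>p\<in>P. x p = 1 \<longrightarrow> g p = 1)
     \<and> (\<forall>i. (\<Sum>p\<in>{p\<in>P. r p = i}. g p) = (\<Sum>p\<in>{p\<in>P. r p = i}. x p))
     \<and> (\<forall>j. (\<Sum>p\<in>{p\<in>P. c p = j}. g p) = (\<Sum>p\<in>{p\<in>P. c p = j}. x p))"
  proof (cases "Fr = {}")
    case True
    then have "\<forall>p\<in>P. x p = 0 \<or> x p = 1" using bnd unfolding Fr_def by force
    then show ?thesis by (intro exI[of _ x]) auto
  next
    case False
    have finF: "finite Fr" using fin by (simp add: Fr_def)
    have dr: "\<forall>p\<in>Fr. \<exists>q\<in>Fr. q \<noteq> p \<and> r q = r p"
    proof
      fix p assume "p \<in> Fr"
      then show "\<exists>q\<in>Fr. q \<noteq> p \<and> r q = r p"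
        using frac_deg[of P p x r] fin bnd ir unfolding Fr_def by force
    qed
    have dc: "\<forall>p\<in>Fr. \<exists>q\<in>Fr. q \<noteq> p \<and> c q = c p"
    proof
      fix p assume "p \<in> Fr"
      then show "\<exists>q\<in>Fr. q \<noteq> p \<and> c q = c p"
        using frac_deg[of P p x c] fin bnd ic unfolding Fr_def by force
    qed
    obtain \<delta> :: "'p \<Rightarrow> real" where
      d1: "\<forall>p. \<delta> p \<noteq> 0 \<longrightarrow> p \<in> Fr" and d2: "\<forall>p. \<delta> p = 0 \<or> \<delta> p = 1 \<or> \<delta> p = -1"
      and d3: "\<exists>p. \<delta> p \<noteq> 0" and d4: "\<forall>i. (\<Sum>p\<in>{p\<in>Fr. r p = i}. \<delta> p) = 0"
      and d5: "\<forall>j. (\<Sum>p\<in>{p\<in>Fr. c p = j}. \<delta> p) = 0"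
      using cycle_exists[OF finF False dr dc] by blast
    define D where "D = {p. \<delta> p \<noteq> 0}"
    define h where "h p = (if \<delta> p = 1 then 1 - x p else x p)" for p
    have DF: "D \<subseteq> Fr" using d1 by (auto simp: D_def)
    have finD: "finite D" using finF DF finite_subset by blast
    have neD: "D \<noteq> {}" using d3 by (auto simp: D_def)
    define \<epsilon> where "\<epsilon> = Min (h ` D)"
    have hpos: "h p > 0" if "p \<in> D" for p using DF that by (auto simp: h_def Fr_def)
    have eps_le: "\<epsilon> \<le> h p" if "p \<in> D" for p using finD that by (simp add: \<epsilon>_def)
    have "\<epsilon> \<in> h ` D" unfolding \<epsilon>_def using finD neD by (intro Min_in) auto
    then obtain p1 where p1: "p1 \<in> D" "h p1 = \<epsilon>" by auto
    have epos: "\<epsilon> > 0" using hpos p1 by auto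
    define x' where "x' p = x p + \<epsilon> * \<delta> p" for p
    have bnd': "\<forall>p\<in>P. 0 \<le> x' p \<and> x' p \<le> 1"
    proof
      fix p assume pP: "p \<in> P"
      show "0 \<le> x' p \<and> x' p \<le> 1"
      proof (cases "\<delta> p = 0")
        case True then show ?thesis using bnd pP by (simp add: x'_def)
      next
        case False
        then have "p \<in> D" by (simp add: D_def)
        then have "\<epsilon> \<le> h p" "p \<in> Fr" using eps_le DF by auto
        then show ?thesis using d2 False epos unfolding x'_def h_def Fr_def
          by (cases "\<delta> p = 1") auto
      qed
    qed
    have sub: "{p\<in>P. 0 < x' p \<and> x' p < 1} \<subseteq> Fr - {p1}"
    proof
      fix p assume p: "p \<in> {p\<in>P. 0 < x' p \<and> x' p < 1}"
      show "p \<in> Fr - {p1}"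
      proof (cases "\<delta> p = 0")
        case True then show ?thesis using p p1(1) by (auto simp: x'_def Fr_def D_def)
      next
        case False
        have "p \<noteq> p1"
        proof
          assume "p = p1"
          then have "x' p = 0 \<or> x' p = 1" using p1 d2 False unfolding x'_def h_def
            by (cases "\<delta> p = 1") auto
          then show False using p by auto
        qed
        then show ?thesis using False d1 by auto
      qed
    qed
    have p1F: "p1 \<in> Fr" using p1 DF by auto
    have lt: "card {p\<in>P. 0 < x' p \<and> x' p < 1} < card {p\<in>P. 0 < x p \<and> x p < 1}"
    proof -
      have "card {p\<in>P. 0 < x' p \<and> x' p < 1} \<le> card (Fr - {p1})"
        using sub finF by (intro card_mono) auto
      also have "\<dots> < card Fr" by (rule card_Diff1_less[OF finF p1F])
      finally show ?thesis by (simp add: Fr_def)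
    qed
    have dsum: "(\<Sum>p\<in>{p\<in>P. \<kappa> p = i}. \<delta> p) = (\<Sum>p\<in>{p\<in>Fr. \<kappa> p = i}. \<delta> p)" for \<kappa> :: "'p \<Rightarrow> 'z" and i
      using fin d1 by (intro sum.mono_neutral_right) (auto simp: Fr_def)
    have xsum: "(\<Sum>p\<in>{p\<in>P. \<kappa> p = i}. x' p) = (\<Sum>p\<in>{p\<in>P. \<kappa> p = i}. x p) + \<epsilon> * (\<Sum>p\<in>{p\<in>Fr. \<kappa> p = i}. \<delta> p)"
      for \<kappa> :: "'p \<Rightarrow> 'z" and i
      by (simp add: x'_def sum.distrib sum_distrib_left[symmetric] dsum)
    have rs: "(\<Sum>p\<in>{p\<in>P. r p = i}. x' p) = (\<Sum>p\<in>{p\<in>P. r p = i}. x p)" for i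
      using xsum[of r i] d4 by simp
    have cs: "(\<Sum>p\<in>{p\<in>P. c p = i}. x' p) = (\<Sum>p\<in>{p\<in>P. c p = i}. x p)" for i
      using xsum[of c i] d5 by simp
    have ir': "\<forall>i. (\<Sum>p\<in>{p\<in>P. r p = i}. x' p) \<in> \<int>" using ir rs by simp
    have ic': "\<forall>i. (\<Sum>p\<in>{p\<in>P. c p = i}. x' p) \<in> \<int>" using ic cs by simp
    have ltN: "card {p\<in>P. 0 < x' p \<and> x' p < 1} < N" using lt cardN by simp
    obtain g where g: "\<forall>p\<in>P. g p = 0 \<or> g p = 1" "\<forall>p\<in>P. x' p = 0 \<longrightarrow> g p = 0"
      "\<forall>p\<in>P. x' p = 1 \<longrightarrow> g p = 1"
      "\<forall>i. (\<Sum>p\<in>{p\<in>P. r p = i}. g p) = (\<Sum>p\<in>{p\<in>P. r p = i}. x' p)"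
      "\<forall>j. (\<Sum>p\<in>{p\<in>P. c p = j}. g p) = (\<Sum>p\<in>{p\<in>P. c p = j}. x' p)"
      using spec[OF less.IH[OF ltN], of x'] bnd' ir' ic' by blast
    have same: "x' p = x p" if "p \<in> P" "x p = 0 \<or> x p = 1" for p
    proof -
      have "p \<notin> Fr" using that by (auto simp: Fr_def)
      then have "\<delta> p = 0" using d1 by auto
      then show ?thesis by (simp add: x'_def)
    qed
    show ?thesis
    proof (intro exI[of _ g] conjI)
      show "\<forall>p\<in>P. g p = 0 \<or> g p = 1" by (rule g(1))
      show "\<forall>p\<in>P. x p = 0 \<longrightarrow> g p = 0" using g(2) same by simp
      show "\<forall>p\<in>P. x p = 1 \<longrightarrow> g p = 1" using g(3) same by simp
      show "\<forall>i. (\<Sum>p\<in>{p\<in>P. r p = i}. g p) = (\<Sum>p\<in>{p\<in>P. r p = i}. x p)"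
        using g(4) rs by simp
      show "\<forall>j. (\<Sum>p\<in>{p\<in>P. c p = j}. g p) = (\<Sum>p\<in>{p\<in>P. c p = j}. x p)"
        using g(5) cs by simp
    qed
  qed
  qed
qed

lemma round01:
  fixes P :: "'p set" and r :: "'p \<Rightarrow> 'a" and c :: "'p \<Rightarrow> 'b" and x :: "'p \<Rightarrow> real"
  assumes "finite P" "\<forall>p\<in>P. 0 \<le> x p \<and> x p \<le> 1"
    "\<forall>i. (\<Sum>p\<in>{p\<in>P. r p = i}. x p) \<in> \<int>" "\<forall>j. (\<Sum>p\<in>{p\<in>P. c p = j}. x p) \<in> \<int>"
  shows "\<exists>g. (\<forall>p\<in>P. g p = 0 \<or> g p = 1) \<and> (\<forall>p\<in>P. x p = 0 \<longrightarrow> g p = 0)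
     \<and> (\<forall>p\<in>P. x p = 1 \<longrightarrow> g p = 1)
     \<and> (\<forall>i. (\<Sum>p\<in>{p\<in>P. r p = i}. g p) = (\<Sum>p\<in>{p\<in>P. r p = i}. x p))
     \<and> (\<forall>j. (\<Sum>p\<in>{p\<in>P. c p = j}. g p) = (\<Sum>p\<in>{p\<in>P. c p = j}. x p))"
  using round01_aux[OF assms(1), of "card {p\<in>P. 0 < x p \<and> x p < 1}" r c] assms by blast

lemma sum_sumtype:
  assumes "finite A" "finite B"
  shows "(\<Sum>q\<in>{q\<in>Inl ` A \<union> Inr ` B. Q q}. f q)
       = (\<Sum>p\<in>{p\<in>A. Q (Inl p)}. f (Inl p)) + (\<Sum>j\<in>{j\<in>B. Q (Inr j)}. f (Inr j))"
proof -
  have e: "{q\<in>Inl ` A \<union> Inr ` B. Q q} = Inl ` {p\<in>A. Q (Inl p)} \<union> Inr ` {j\<in>B. Q (Inr j)}" by auto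
  show ?thesis unfolding e using assms by (subst sum.union_disjoint) (auto simp: sum.reindex)
qed

lemma cnt_absorb:
  assumes "a \<ge> 1"
  shows "(if c \<le> k then a choose (k - c) else 0) * (k - c)
       = a * (if c < k then (a - 1) choose (k - c - 1) else 0)"
proof (cases "c < k")
  case True
  then obtain j where j: "k - c = Suc j" by (metis Suc_diff_Suc)
  then have "k - c - 1 = j" by simp
  then show ?thesis using True j binomial_absorption[of j a] by (simp add: mult.commute)
qed auto

lemma cnt_pascal:
  assumes "a \<ge> 1"
  shows "(if c \<le> k then a choose (k - c) else 0)
       = (if c < k then (a - 1) choose (k - c - 1) else 0) + (if c \<le> k then (a - 1) choose (k - c) else 0)"
proof (cases "c < k")
  case True
  then obtain j where j: "k - c = Suc j" by (metis Suc_diff_Suc)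
  obtain a' where a: "a = Suc a'" using assms by (cases a) auto
  show ?thesis using True j a by simp
qed auto

definition cnt :: "nat \<Rightarrow> nat \<Rightarrow> nat \<Rightarrow> nat set \<Rightarrow> nat" where
  "cnt n k t S = (if card S \<le> k then (n - t) choose (k - card S) else 0)"

definition binv :: "nat \<Rightarrow> nat \<Rightarrow> nat \<Rightarrow> nat \<Rightarrow> nat \<Rightarrow> (nat \<Rightarrow> nat set) \<Rightarrow> bool" where
  "binv n k s N t B \<longleftrightarrow> (\<forall>p<N. B p \<subseteq> {1..t})
    \<and> (\<forall>p<N. \<forall>q<N. p \<noteq> q \<longrightarrow> p div s = q div s \<longrightarrow> B p \<inter> B q = {})
    \<and> (\<forall>S. S \<subseteq> {1..t} \<longrightarrow> card {p. p < N \<and> B p = S} = cnt n k t S)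
    \<and> (\<forall>i. (\<Sum>p\<in>{p. p < N \<and> p div s = i}. k - card (B p)) \<le> n - t)"

lemma binv_step:
  assumes tn: "t < n" and inv: "binv n k s N t B"
  shows "\<exists>B'. binv n k s N (Suc t) B'"
proof -
  have I1: "\<forall>p<N. B p \<subseteq> {1..t}" using inv unfolding binv_def by blast
  have I2: "\<forall>p<N. \<forall>q<N. p \<noteq> q \<longrightarrow> p div s = q div s \<longrightarrow> B p \<inter> B q = {}"
    using inv unfolding binv_def by blast
  have I3: "\<forall>S. S \<subseteq> {1..t} \<longrightarrow> card {p. p < N \<and> B p = S} = cnt n k t S"
    using inv unfolding binv_def by blast
  have I4: "\<forall>i. (\<Sum>p\<in>{p. p < N \<and> p div s = i}. k - card (B p)) \<le> n - t"
    using inv unfolding binv_def by blast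
  define a where "a = n - t"
  have a1: "a \<ge> 1" using tn by (simp add: a_def)
  define cls where "cls i = {p. p < N \<and> p div s = i}" for i
  define xr where "xr p = real (k - card (B p)) / real a" for p
  define w where "w i = (\<Sum>p\<in>cls i. xr p)" for i
  define P :: "(nat + nat) set" where "P = Inl ` {..<N} \<union> Inr ` {..<N}"
  define rr where "rr q = (case q of Inl p \<Rightarrow> p div s | Inr i \<Rightarrow> i)" for q :: "nat + nat"
  define cc where "cc q = (case q of Inl p \<Rightarrow> Some (B p) | Inr i \<Rightarrow> None)" for q :: "nat + nat"
  define xv where "xv q = (case q of Inl p \<Rightarrow> xr p | Inr i \<Rightarrow> 1 - w i)" for q
  define dem where "dem S = (if card S < k then (a - 1) choose (k - card S - 1) else 0)" for S :: "nat set"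
  have finS: "finite {p. p < N \<and> Q p}" for Q by simp
  have finB: "finite (B p)" if "p < N" for p using I1 that finite_subset by blast
  have F0: "card (B p) \<le> k \<and> k - card (B p) \<le> a" if "p < N" for p
  proof -
    have "0 < card {q. q < N \<and> B q = B p}" using that by (subst card_gt_0_iff) auto
    then have "cnt n k t (B p) > 0" using I3 I1 that by simp
    then show ?thesis by (auto simp: cnt_def a_def split: if_splits)
  qed
  have colsum: "(\<Sum>p\<in>{p. p < N \<and> B p = S}. xr p) = real (dem S)" if "S \<subseteq> {1..t}" for S
  proof -
    have "(\<Sum>p\<in>{p. p < N \<and> B p = S}. xr p) = (\<Sum>p\<in>{p. p < N \<and> B p = S}. real (k - card S) / real a)"
      by (rule sum.cong) (auto simp: xr_def)
    also have "\<dots> = real (cnt n k t S) * real (k - card S) / real a" using I3 that by simp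
    also have "\<dots> = real (dem S)"
    proof -
      have "cnt n k t S * (k - card S) = a * dem S"
        using cnt_absorb[of a "card S" k] a1 by (simp only: cnt_def dem_def a_def[symmetric])
      then have "real (cnt n k t S) * real (k - card S) = real a * real (dem S)" by (metis of_nat_mult)
      then show ?thesis using a1 by (simp add: field_simps)
    qed
    finally show ?thesis .
  qed
  have colsum0: "(\<Sum>p\<in>{p. p < N \<and> B p = S}. xr p) = 0" if "\<not> S \<subseteq> {1..t}" for S
  proof -
    have "{p. p < N \<and> B p = S} = {}" using I1 that by auto
    then show ?thesis by (simp only: sum.empty)
  qed
  have colint: "(\<Sum>p\<in>{p. p < N \<and> B p = S}. xr p) \<in> \<int>" for S
    using colsum colsum0 by (cases "S \<subseteq> {1..t}") auto
  have clsN: "cls i = {}" if "i \<ge> N" for i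
  proof -
    have h: "p div s < N" if "p < N" for p using that div_le_dividend le_less_trans by blast
    show ?thesis
    proof (rule equals0I)
      fix p assume "p \<in> cls i"
      then have "p < N" "p div s = i" by (auto simp: cls_def)
      then show False using h[of p] that by simp
    qed
  qed
  have wD: "w i = real (\<Sum>p\<in>cls i. k - card (B p)) / real a" for i
    by (simp add: w_def xr_def sum_divide_distrib)
  have Dle: "(\<Sum>p\<in>cls i. k - card (B p)) \<le> a" for i using I4 by (simp add: cls_def a_def)
  have w_le: "w i \<le> 1" for i
  proof -
    have d: "real (\<Sum>p\<in>cls i. k - card (B p)) \<le> real a" using Dle[of i] by (simp only: of_nat_le_iff)
    have "real (\<Sum>p\<in>cls i. k - card (B p)) / real a \<le> 1"
      using d a1 by (simp del: of_nat_sum add: divide_le_eq)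
    then show ?thesis unfolding wD .
  qed
  have w_ge: "w i \<ge> 0" for i by (simp add: w_def xr_def sum_nonneg)
  have xr_bnd: "0 \<le> xr p \<and> xr p \<le> 1" if "p < N" for p
  proof -
    have "real (k - card (B p)) \<le> real a" using F0[OF that] by (simp only: of_nat_le_iff)
    then show ?thesis using a1 by (simp add: xr_def divide_le_eq del: of_nat_diff)
  qed
  have sumw: "(\<Sum>i<N. w i) = (\<Sum>p<N. xr p)"
  proof -
    have "(\<Sum>i<N. w i) = (\<Sum>i\<in>{..<N}. sum xr {p\<in>{..<N}. p div s = i})"
      unfolding w_def cls_def by (intro sum.cong refl arg_cong[where f="sum xr"]) auto
    also have "\<dots> = (\<Sum>p<N. xr p)"
    proof (rule sum.group)
      show "(\<lambda>p. p div s) ` {..<N} \<subseteq> {..<N}"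
        by (auto intro: le_less_trans[OF div_le_dividend])
    qed auto
    finally show ?thesis .
  qed
  have sumxr: "(\<Sum>p<N. xr p) \<in> \<int>"
  proof -
    have "(\<Sum>p<N. xr p) = (\<Sum>S\<in>B ` {..<N}. sum xr {p\<in>{..<N}. B p = S})"
      by (rule sum.image_gen) simp
    also have "\<dots> \<in> \<int>"
    proof (rule Ints_sum)
      fix S
      have "{p\<in>{..<N}. B p = S} = {p. p < N \<and> B p = S}" by auto
      then show "sum xr {p\<in>{..<N}. B p = S} \<in> \<int>" using colint by simp
    qed
    finally show ?thesis .
  qed
  have finP: "finite P" by (simp add: P_def)
  have bndP: "\<forall>q\<in>P. 0 \<le> xv q \<and> xv q \<le> 1"
    using xr_bnd w_le w_ge by (auto simp: P_def xv_def)
  have rowsum: "(\<Sum>q\<in>{q\<in>P. rr q = i}. xv q) = (if i < N then 1 else 0)" for i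
  proof -
    have "(\<Sum>q\<in>{q\<in>P. rr q = i}. xv q)
        = (\<Sum>p\<in>{p\<in>{..<N}. p div s = i}. xr p) + (\<Sum>j\<in>{j\<in>{..<N}. j = i}. 1 - w j)"
      unfolding P_def by (subst sum_sumtype) (auto simp: rr_def xv_def)
    also have "(\<Sum>p\<in>{p\<in>{..<N}. p div s = i}. xr p) = w i"
      unfolding w_def cls_def by (intro sum.cong refl) auto
    also have "{j\<in>{..<N}. j = i} = (if i < N then {i} else {})" by auto
    finally show ?thesis using clsN[of i] by (auto simp: w_def)
  qed
  have rowint: "\<forall>i. (\<Sum>q\<in>{q\<in>P. rr q = i}. xv q) \<in> \<int>"
    unfolding rowsum by simp
  have colsumP: "(\<Sum>q\<in>{q\<in>P. cc q = Some S}. xv q) = (\<Sum>p\<in>{p. p < N \<and> B p = S}. xr p)" for S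
  proof -
    have "(\<Sum>q\<in>{q\<in>P. cc q = Some S}. xv q)
        = (\<Sum>p\<in>{p\<in>{..<N}. B p = S}. xr p) + (\<Sum>j\<in>{j\<in>{..<N}. False}. 1 - w j)"
      unfolding P_def by (subst sum_sumtype) (auto simp: cc_def xv_def)
    also have "{p\<in>{..<N}. B p = S} = {p. p < N \<and> B p = S}" by auto
    finally show ?thesis by simp
  qed
  have colsumNone: "(\<Sum>q\<in>{q\<in>P. cc q = None}. xv q) = real N - (\<Sum>p<N. xr p)"
  proof -
    have "(\<Sum>q\<in>{q\<in>P. cc q = None}. xv q)
        = (\<Sum>p\<in>{p\<in>{..<N}. False}. xr p) + (\<Sum>j\<in>{j\<in>{..<N}. True}. 1 - w j)"
      unfolding P_def by (subst sum_sumtype) (auto simp: cc_def xv_def)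
    also have "\<dots> = (\<Sum>j<N. 1 - w j)" by (simp add: lessThan_def)
    also have "\<dots> = real N - (\<Sum>p<N. xr p)" by (simp add: sum_subtractf sumw)
    finally show ?thesis .
  qed
  have colint2: "\<forall>j. (\<Sum>q\<in>{q\<in>P. cc q = j}. xv q) \<in> \<int>"
  proof
    fix j show "(\<Sum>q\<in>{q\<in>P. cc q = j}. xv q) \<in> \<int>"
    proof (cases j)
      case None then show ?thesis using sumxr colsumNone by (simp add: Ints_diff)
    next
      case (Some S) then show ?thesis using colsumP colint by simp
    qed
  qed
  obtain g where g1: "\<forall>q\<in>P. g q = 0 \<or> g q = 1" and g2: "\<forall>q\<in>P. xv q = 0 \<longrightarrow> g q = 0"
    and g3: "\<forall>q\<in>P. xv q = 1 \<longrightarrow> g q = 1"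
    and g4: "\<forall>i. (\<Sum>q\<in>{q\<in>P. rr q = i}. g q) = (\<Sum>q\<in>{q\<in>P. rr q = i}. xv q)"
    and g5: "\<forall>j. (\<Sum>q\<in>{q\<in>P. cc q = j}. g q) = (\<Sum>q\<in>{q\<in>P. cc q = j}. xv q)"
    using round01[OF finP bndP rowint colint2] by blast
  define ch where "ch p \<longleftrightarrow> p < N \<and> g (Inl p) = 1" for p
  define B' where "B' p = (if ch p then insert (Suc t) (B p) else B p)" for p
  have gI: "g (Inl p) = 0 \<or> g (Inl p) = 1" if "p < N" for p using g1 that by (auto simp: P_def)
  have gR: "g (Inr i) = 0 \<or> g (Inr i) = 1" if "i < N" for i using g1 that by (auto simp: P_def)
  have finA: "finite {p. p < N \<and> Q p}" for Q by simp
  have gsum: "(\<Sum>p\<in>{p. p < N \<and> Q p}. g (Inl p)) = real (card {p. p < N \<and> Q p \<and> g (Inl p) = 1})" for Q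
  proof -
    have "(\<Sum>p\<in>{p. p < N \<and> Q p}. g (Inl p)) = (\<Sum>p\<in>{p. p < N \<and> Q p}. if g (Inl p) = 1 then 1 else 0)"
      by (rule sum.cong) (use gI in auto)
    also have "\<dots> = (\<Sum>p\<in>{p\<in>{p. p < N \<and> Q p}. g (Inl p) = 1}. 1)"
      by (rule sum.inter_filter[OF finA, symmetric])
    also have "{p\<in>{p. p < N \<and> Q p}. g (Inl p) = 1} = {p. p < N \<and> Q p \<and> g (Inl p) = 1}" by auto
    finally show ?thesis by simp
  qed
  have chk: "card (B p) < k" if "ch p" for p
  proof -
    have "p < N" "g (Inl p) = 1" using that by (auto simp: ch_def)
    then have "xv (Inl p) \<noteq> 0" using g2 by (auto simp: P_def)
    then show ?thesis using a1 by (auto simp: xv_def xr_def)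
  qed
  have rowexp: "(\<Sum>q\<in>{q\<in>P. rr q = i}. f q) = (\<Sum>p\<in>cls i. f (Inl p)) + (if i < N then f (Inr i) else 0)"
    for f :: "nat + nat \<Rightarrow> real" and i
  proof -
    have "(\<Sum>q\<in>{q\<in>P. rr q = i}. f q)
        = (\<Sum>p\<in>{p\<in>{..<N}. p div s = i}. f (Inl p)) + (\<Sum>j\<in>{j\<in>{..<N}. j = i}. f (Inr j))"
      unfolding P_def by (subst sum_sumtype) (auto simp: rr_def)
    also have "{p\<in>{..<N}. p div s = i} = cls i" by (auto simp: cls_def)
    also have "{j\<in>{..<N}. j = i} = (if i < N then {i} else {})" by auto
    finally show ?thesis by simp
  qed
  have colexp: "(\<Sum>q\<in>{q\<in>P. cc q = Some S}. f q) = (\<Sum>p\<in>{p. p < N \<and> B p = S}. f (Inl p))"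
    for f :: "nat + nat \<Rightarrow> real" and S
  proof -
    have "(\<Sum>q\<in>{q\<in>P. cc q = Some S}. f q)
        = (\<Sum>p\<in>{p\<in>{..<N}. B p = S}. f (Inl p)) + (\<Sum>j\<in>{j\<in>{..<N}. False}. f (Inr j))"
      unfolding P_def by (subst sum_sumtype) (auto simp: cc_def)
    also have "{p\<in>{..<N}. B p = S} = {p. p < N \<and> B p = S}" by auto
    finally show ?thesis by simp
  qed
  have card_col: "card {p. p < N \<and> B p = S \<and> g (Inl p) = 1} = dem S" if "S \<subseteq> {1..t}" for S
  proof -
    have "real (card {p. p < N \<and> B p = S \<and> g (Inl p) = 1}) = (\<Sum>p\<in>{p. p < N \<and> B p = S}. g (Inl p))"
      using gsum[of "\<lambda>p. B p = S"] by simp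
    also have "\<dots> = (\<Sum>p\<in>{p. p < N \<and> B p = S}. xv (Inl p))"
      using g5 colexp[where S=S and f=g] colexp[where S=S and f=xv] by metis
    also have "\<dots> = real (dem S)" using colsum[OF that] by (simp add: xv_def)
    finally show ?thesis by (simp only: of_nat_eq_iff)
  qed
  have card_cls: "real (card {p. p < N \<and> p div s = i \<and> g (Inl p) = 1}) + g (Inr i) = 1" if "i < N" for i
  proof -
    have "(\<Sum>p\<in>cls i. g (Inl p)) + g (Inr i) = (\<Sum>p\<in>cls i. xv (Inl p)) + xv (Inr i)"
      using g4 rowexp[where i=i and f=g] rowexp[where i=i and f=xv] that by simp
    also have "\<dots> = 1" by (simp add: xv_def w_def)
    finally show ?thesis using gsum[of "\<lambda>p. p div s = i"] by (simp add: cls_def)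
  qed
  have notinB: "Suc t \<notin> B p" if "p < N" for p
  proof
    assume "Suc t \<in> B p"
    then have "Suc t \<in> {1..t}" using I1 that by blast
    then show False by simp
  qed
  have J1: "\<forall>p<N. B' p \<subseteq> {1..Suc t}"
  proof (intro allI impI)
    fix p assume "p < N"
    then have "B p \<subseteq> {1..t}" using I1 by blast
    then show "B' p \<subseteq> {1..Suc t}" by (auto simp: B'_def)
  qed
  have J2: "\<forall>p<N. \<forall>q<N. p \<noteq> q \<longrightarrow> p div s = q div s \<longrightarrow> B' p \<inter> B' q = {}"
  proof (intro allI impI)
    fix p q assume pq: "p < N" "q < N" "p \<noteq> q" "p div s = q div s"
    have not_both: "\<not> (ch p \<and> ch q)"
    proof
      assume both: "ch p \<and> ch q"
      define i where "i = p div s"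
      have iN: "i < N" using pq(1) unfolding i_def using div_le_dividend le_less_trans by blast
      have "{p, q} \<subseteq> {x. x < N \<and> x div s = i \<and> g (Inl x) = 1}"
        using both pq by (auto simp: ch_def i_def)
      then have "card {p, q} \<le> card {x. x < N \<and> x div s = i \<and> g (Inl x) = 1}"
        by (intro card_mono) auto
      then have "2 \<le> card {x. x < N \<and> x div s = i \<and> g (Inl x) = 1}" using pq(3) by simp
      moreover have "g (Inr i) \<ge> 0" using gR[OF iN] by auto
      ultimately show False using card_cls[OF iN] by linarith
    qed
    show "B' p \<inter> B' q = {}"
      using I2 pq not_both notinB[OF pq(1)] notinB[OF pq(2)] by (auto simp: B'_def)
  qed
  have J3: "\<forall>S. S \<subseteq> {1..Suc t} \<longrightarrow> card {p. p < N \<and> B' p = S} = cnt n k (Suc t) S"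
  proof (intro allI impI)
    fix S assume S: "S \<subseteq> {1..Suc t}"
    show "card {p. p < N \<and> B' p = S} = cnt n k (Suc t) S"
    proof (cases "Suc t \<in> S")
      case True
      define S0 where "S0 = S - {Suc t}"
      have S0: "S0 \<subseteq> {1..t}" using S by (auto simp: S0_def)
      have finS0: "finite S0" using S0 finite_subset by blast
      have finS: "finite S" using S finite_subset by blast
      have cS: "card S = Suc (card S0)" using card_Suc_Diff1[OF finS True] by (simp add: S0_def)
      have eq: "{p. p < N \<and> B' p = S} = {p. p < N \<and> B p = S0 \<and> g (Inl p) = 1}"
      proof (rule set_eqI, rule iffI)
        fix p assume "p \<in> {p. p < N \<and> B' p = S}"
        then have p: "p < N" "B' p = S" by auto
        have "ch p"
        proof (rule ccontr)
          assume "\<not> ch p"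
          then have "B p = S" using p by (simp add: B'_def)
          then show False using True notinB[OF p(1)] by simp
        qed
        then have "insert (Suc t) (B p) = S" using p by (simp add: B'_def)
        then have "B p = S0" using notinB[OF p(1)] unfolding S0_def by auto
        then show "p \<in> {p. p < N \<and> B p = S0 \<and> g (Inl p) = 1}" using \<open>ch p\<close> by (simp add: ch_def)
      next
        fix p assume "p \<in> {p. p < N \<and> B p = S0 \<and> g (Inl p) = 1}"
        then have p: "p < N" "B p = S0" "ch p" by (auto simp: ch_def)
        then have "B' p = insert (Suc t) S0" by (simp add: B'_def)
        also have "\<dots> = S" using True unfolding S0_def by auto
        finally show "p \<in> {p. p < N \<and> B' p = S}" using p by simp
      qed
      show ?thesis unfolding eq card_col[OF S0] using cS
        by (simp add: dem_def cnt_def a_def)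
    next
      case False
      then have S': "S \<subseteq> {1..t}" using S by (auto simp: le_Suc_eq)
      have eq: "{p. p < N \<and> B' p = S} = {p. p < N \<and> B p = S} - {p. p < N \<and> B p = S \<and> g (Inl p) = 1}"
      proof (rule set_eqI, rule iffI)
        fix p assume "p \<in> {p. p < N \<and> B' p = S}"
        then have p: "p < N" "B' p = S" by auto
        have "\<not> ch p"
        proof
          assume "ch p"
          then have "Suc t \<in> B' p" by (simp add: B'_def)
          then show False using p False by simp
        qed
        then show "p \<in> {p. p < N \<and> B p = S} - {p. p < N \<and> B p = S \<and> g (Inl p) = 1}"
          using p by (auto simp: B'_def ch_def)
      next
        fix p assume "p \<in> {p. p < N \<and> B p = S} - {p. p < N \<and> B p = S \<and> g (Inl p) = 1}"
        then show "p \<in> {p. p < N \<and> B' p = S}" by (auto simp: B'_def ch_def)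
      qed
      have "card {p. p < N \<and> B' p = S} = cnt n k t S - dem S"
        unfolding eq using I3 S' card_col[OF S'] by (subst card_Diff_subset) auto
      moreover have "cnt n k t S = dem S + cnt n k (Suc t) S"
        using cnt_pascal[of a "card S" k] a1 unfolding cnt_def dem_def a_def by simp
      ultimately show ?thesis by simp
    qed
  qed
  have J4: "\<forall>i. (\<Sum>p\<in>{p. p < N \<and> p div s = i}. k - card (B' p)) \<le> n - Suc t"
  proof
    fix i
    define D where "D = (\<Sum>p\<in>cls i. k - card (B p))"
    define D' where "D' = (\<Sum>p\<in>cls i. k - card (B' p))"
    define G where "G = card {p. p < N \<and> p div s = i \<and> g (Inl p) = 1}"
    have GG: "G = (\<Sum>p\<in>cls i. if ch p then 1 else 0)"
    proof -
      have "(\<Sum>p\<in>cls i. if ch p then 1 else 0) = (\<Sum>p\<in>{p\<in>cls i. ch p}. 1::nat)"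
        by (simp add: sum.inter_filter[symmetric] cls_def)
      also have "{p\<in>cls i. ch p} = {p. p < N \<and> p div s = i \<and> g (Inl p) = 1}"
        by (auto simp: cls_def ch_def)
      finally show ?thesis by (simp add: G_def)
    qed
    have DD: "D' + G = D"
    proof -
      have "D' + G = (\<Sum>p\<in>cls i. (k - card (B' p)) + (if ch p then 1 else 0))"
        unfolding D'_def GG by (simp add: sum.distrib)
      also have "\<dots> = D" unfolding D_def
      proof (rule sum.cong)
        fix p assume "p \<in> cls i"
        then have pN: "p < N" by (simp add: cls_def)
        show "k - card (B' p) + (if ch p then 1 else 0) = k - card (B p)"
        proof (cases "ch p")
          case True
          have "card (B' p) = Suc (card (B p))"
            using True finB[OF pN] notinB[OF pN] by (simp add: B'_def)
          then show ?thesis using True chk[OF True] by simp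
        qed (simp add: B'_def)
      qed simp
      finally show ?thesis .
    qed
    have "D \<le> a" using Dle[of i] by (simp add: D_def)
    have "D' \<le> a - 1"
    proof (cases "D = a")
      case True
      have iN: "i < N"
      proof (rule ccontr)
        assume "\<not> i < N"
        then have "cls i = {}" using clsN by simp
        then have "D = 0" by (simp add: D_def)
        then show False using True a1 by simp
      qed
      have "w i = 1" using True a1 unfolding wD D_def[symmetric] by simp
      then have "xv (Inr i) = 0" by (simp add: xv_def)
      then have "g (Inr i) = 0" using g2 iN by (auto simp: P_def)
      then have "G = 1" using card_cls[OF iN] by (simp add: G_def)
      then show ?thesis using DD True by simp
    next
      case False
      then show ?thesis using DD \<open>D \<le> a\<close> by simp
    qed
    then show "(\<Sum>p\<in>{p. p < N \<and> p div s = i}. k - card (B' p)) \<le> n - Suc t"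
      by (simp add: D'_def cls_def a_def)
  qed
  show ?thesis unfolding binv_def using J1 J2 J3 J4 by blast
qed

lemma binv_init:
  assumes s1: "s \<ge> 1" and sk: "s * k \<le> n"
  shows "binv n k s (n choose k) 0 (\<lambda>p. {})"
proof -
  have I3: "\<forall>S. S \<subseteq> {1..0::nat} \<longrightarrow> card {p. p < (n choose k) \<and> ({}::nat set) = S} = cnt n k 0 S"
  proof (intro allI impI)
    fix S :: "nat set" assume "S \<subseteq> {1..0}"
    then have "S = {}" by auto
    then show "card {p. p < (n choose k) \<and> ({}::nat set) = S} = cnt n k 0 S"
      by (simp add: cnt_def)
  qed
  have I4: "(\<Sum>p\<in>{p. p < (n choose k) \<and> p div s = i}. k - card ({}::nat set)) \<le> n - 0" for i
  proof -
    have sub: "{p. p < (n choose k) \<and> p div s = i} \<subseteq> {i * s..<i * s + s}"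
    proof
      fix p assume "p \<in> {p. p < (n choose k) \<and> p div s = i}"
      then have pi: "p div s = i" by simp
      have l: "i * s \<le> p" using div_times_less_eq_dividend[of p s] pi by simp
      have e: "p = p div s * s + p mod s" by simp
      have "p mod s < s" using s1 by simp
      moreover have "p = i * s + p mod s" using e pi by simp
      ultimately have "p < i * s + s" by linarith
      then show "p \<in> {i * s..<i * s + s}" using l by simp
    qed
    have "card {p. p < (n choose k) \<and> p div s = i} \<le> s"
      using card_mono[OF _ sub] by simp
    then have "k * card {p. p < (n choose k) \<and> p div s = i} \<le> k * s" by (rule mult_le_mono2)
    moreover have "k * s \<le> n" using sk by (simp add: mult.commute)
    ultimately have "k * card {p. p < (n choose k) \<and> p div s = i} \<le> n" by (rule le_trans)
    then show ?thesis by (simp add: mult.commute)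
  qed
  show ?thesis unfolding binv_def using I3 I4 by simp
qed

lemma binv_all:
  assumes s1: "s \<ge> 1" and sk: "s * k \<le> n"
  shows "t \<le> n \<Longrightarrow> \<exists>B. binv n k s (n choose k) t B"
proof (induction t)
  case 0 then show ?case using binv_init[OF s1 sk] by blast
next
  case (Suc t)
  then obtain B where "binv n k s (n choose k) t B" by auto
  then show ?case using binv_step[of t n k s "n choose k" B] Suc.prems by auto
qed

lemma colouring_exists:
  assumes s1: "s \<ge> 1" and sk: "s * k \<le> n"
  shows "\<exists>f. proper_colouring n k (((n choose k) - 1) div s + 1) f"
proof -
  let ?N = "n choose k"
  obtain B where inv: "binv n k s ?N n B" using binv_all[OF s1 sk] by blast
  have I2: "\<forall>p<?N. \<forall>q<?N. p \<noteq> q \<longrightarrow> p div s = q div s \<longrightarrow> B p \<inter> B q = {}"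
    using inv unfolding binv_def by blast
  have I3: "\<forall>S. S \<subseteq> {1..n} \<longrightarrow> card {p. p < ?N \<and> B p = S} = cnt n k n S"
    using inv unfolding binv_def by blast
  have uniq: "\<exists>!p. p < ?N \<and> B p = A" if "A \<in> kneser_vertices n k" for A
  proof -
    have A: "A \<subseteq> {1..n}" "card A = k" using that by (auto simp: kneser_vertices_def)
    then have "card {p. p < ?N \<and> B p = A} = 1" using I3 by (simp add: cnt_def)
    then obtain p where "{p. p < ?N \<and> B p = A} = {p}" by (rule card_1_singletonE)
    then show ?thesis by (metis (mono_tags, lifting) mem_Collect_eq singletonD singletonI)
  qed
  define pp where "pp A = (THE p. p < ?N \<and> B p = A)" for A
  have pp: "pp A < ?N \<and> B (pp A) = A" if "A \<in> kneser_vertices n k" for A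
    unfolding pp_def by (rule theI'[OF uniq[OF that]])
  define f where "f A = pp A div s" for A
  have "proper_colouring n k ((?N - 1) div s + 1) f"
    unfolding proper_colouring_def
  proof (intro conjI ballI impI)
    fix A assume A: "A \<in> kneser_vertices n k"
    have "pp A \<le> ?N - 1" using pp[OF A] by linarith
    then have "pp A div s \<le> (?N - 1) div s" by (rule div_le_mono)
    then show "f A < (?N - 1) div s + 1" by (simp add: f_def)
  next
    fix A A' assume A: "A \<in> kneser_vertices n k" and A': "A' \<in> kneser_vertices n k"
      and adj: "compl_kneser_adj A A'"
    show "f A \<noteq> f A'"
    proof
      assume eq: "f A = f A'"
      have ne: "pp A \<noteq> pp A'"
      proof
        assume "pp A = pp A'"
        then have "A = A'" using pp[OF A] pp[OF A'] by metis
        then show False using adj by (simp add: compl_kneser_adj_def)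
      qed
      have eqd: "pp A div s = pp A' div s" using eq by (simp add: f_def)
      have "B (pp A) \<inter> B (pp A') = {}"
        using pp[OF A] pp[OF A'] ne eqd by (intro I2[rule_format]) auto
      then show False using pp[OF A] pp[OF A'] adj by (simp add: compl_kneser_adj_def)
    qed
  qed
  then show ?thesis by blast
qed

lemma chi_le:
  assumes "s \<ge> 1" "s * k \<le> n"
  shows "chi_compl_kneser n k \<le> ((n choose k) - 1) div s + 1"
proof -
  obtain f where "proper_colouring n k (((n choose k) - 1) div s + 1) f"
    using colouring_exists[OF assms] by blast
  then show ?thesis unfolding chi_compl_kneser_def by (intro Least_le) blast
qed

lemma absorb2: "Suc k * (n choose Suc k) = (n - k) * (n choose k)"
  using binomial_absorption[of k n] binomial_absorb_comp[of n k] by simp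

lemma pow2_choose: "2^k * (a choose k) \<le> (2*a) choose k"
proof (induction k)
  case 0 show ?case by simp
next
  case (Suc k)
  have "Suc k * (2^Suc k * (a choose Suc k)) = 2^Suc k * (Suc k * (a choose Suc k))"
    by (simp only: mult.left_commute)
  also have "\<dots> = 2^Suc k * ((a - k) * (a choose k))" by (simp only: absorb2)
  also have "\<dots> = 2 * (a - k) * (2^k * (a choose k))" by (simp only: power_Suc mult_ac)
  also have "\<dots> \<le> 2 * (a - k) * ((2*a) choose k)" using Suc.IH by (intro mult_left_mono) auto
  also have "\<dots> \<le> (2*a - k) * ((2*a) choose k)" by (intro mult_right_mono) auto
  also have "\<dots> = Suc k * ((2*a) choose Suc k)" using absorb2[of k "2*a"] by simp
  finally show ?case by (simp only: mult_le_cancel1)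
qed

lemma H_bound: "2 * a \<le> n \<Longrightarrow> 2^k * (a choose k) \<le> n choose k"
  using pow2_choose[of k a] binomial_right_mono[of "2*a" n k] by linarith

lemma hockey:
  assumes "k \<ge> 1"
  shows "M \<le> n \<Longrightarrow> (\<Sum>i=1..M. ((n - i) choose (k - 1))) + ((n - M) choose k) = (n choose k)"
proof (induction M)
  case 0 show ?case by simp
next
  case (Suc M)
  have e1: "n - M = Suc (n - Suc M)" using Suc.prems by simp
  have e2: "k = Suc (k - 1)" using assms by simp
  have pas: "((n - Suc M) choose (k - 1)) + ((n - Suc M) choose k) = ((n - M) choose k)"
    using binomial_Suc_Suc[of "n - Suc M" "k - 1"] e1 e2 by simp
  have "(\<Sum>i=1..Suc M. ((n - i) choose (k - 1))) + ((n - Suc M) choose k)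
      = (\<Sum>i=1..M. ((n - i) choose (k - 1))) + (((n - Suc M) choose (k - 1)) + ((n - Suc M) choose k))"
    by simp
  also have "\<dots> = (n choose k)" using pas Suc.IH Suc.prems by simp
  finally show ?case .
qed

lemma sumfloor:
  fixes f :: "nat \<Rightarrow> nat"
  assumes "finite I"
  shows "(\<Sum>i\<in>I. f i) \<le> (l+1) * (\<Sum>i\<in>I. f i div (l+1)) + card I * l"
proof -
  have "(\<Sum>i\<in>I. f i) \<le> (\<Sum>i\<in>I. (l+1) * (f i div (l+1)) + l)"
  proof (rule sum_mono)
    fix i
    have "f i = (l+1) * (f i div (l+1)) + f i mod (l+1)" by (metis div_mult_mod_eq mult.commute)
    moreover have "f i mod (l+1) \<le> l" by (metis Suc_eq_plus1 less_Suc_eq_le mod_less_divisor zero_less_Suc)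
    ultimately show "f i \<le> (l+1) * (f i div (l+1)) + l" by linarith
  qed
  also have "\<dots> = (l+1) * (\<Sum>i\<in>I. f i div (l+1)) + card I * l"
    by (simp add: sum.distrib sum_distrib_left)
  finally show ?thesis .
qed

lemma N2_bounds:
  "n \<le> 2 * nat \<lceil>real n / 2\<rceil> \<and> 2 * nat \<lceil>real n / 2\<rceil> \<le> n + 1"
proof -
  define c where "c = \<lceil>real n / 2\<rceil>"
  have cc: "real_of_int c - 1 < real n / 2 \<and> real n / 2 \<le> real_of_int c"
    unfolding c_def by (rule ceiling_correct)
  then have c: "real_of_int c - 1 < real n / 2" "real n / 2 \<le> real_of_int c" by auto
  have c0: "c \<ge> 0" using c(2) by linarith
  have a: "int n \<le> 2 * c" using c(2) by linarith
  have b: "2 * c \<le> int n + 1" using c(1) by linarith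
  show ?thesis using a b c0 unfolding c_def[symmetric] by linarith
qed

lemma l_bound:
  assumes "k \<ge> 2" "n \<ge> 1"
  shows "(2*k - 2) * nat \<lceil>(real n - 1) / (2 * (real k - 1))\<rceil> \<le> n + 2*k - 4"
proof -
  define x where "x = (real n - 1) / (2 * (real k - 1))"
  define c where "c = \<lceil>x\<rceil>"
  have d: "2 * (real k - 1) > 0" using assms by simp
  have x0: "x \<ge> 0" using assms d unfolding x_def by simp
  have c: "real_of_int c - 1 < x" using ceiling_correct unfolding c_def by auto
  have c0: "c \<ge> 0" using x0 le_of_int_ceiling[of x] unfolding c_def by linarith
  have "(real_of_int c - 1) * (2 * (real k - 1)) < real n - 1"
    using c d unfolding x_def by (simp add: pos_less_divide_eq)
  then have "real_of_int ((c - 1) * (2 * (int k - 1))) < real_of_int (int n - 1)" by simp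
  then have "(c - 1) * (2 * (int k - 1)) < int n - 1" by (simp only: of_int_less_iff)
  then have "c * (2 * int k - 2) \<le> int n + 2 * int k - 4" by (simp add: algebra_simps)
  moreover define l where "l = nat c"
  moreover have lc: "int l = c" using c0 by (simp add: l_def)
  ultimately have "int ((2*k - 2) * l) \<le> int (n + 2*k - 4)" using assms
    by (simp add: of_nat_diff algebra_simps)
  then have "(2*k - 2) * l \<le> n + 2*k - 4" by (simp only: of_nat_le_iff)
  then show ?thesis unfolding l_def c_def x_def .
qed

lemma layer:
  fixes T l N2 H N s X L M :: real
  assumes A: "(l+1)*T + N2*l + H \<ge> N" and XH: "X*H \<le> N" and X1: "X \<ge> 1"
    and l0: "0 \<le> l" and lL: "l \<le> L" and N20: "0 \<le> N2" and N2M: "N2 \<le> M"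
    and N0: "N \<ge> 0" and s0: "s \<ge> 0"
    and CI: "(s*(X-1) - X*(L+1))*N \<ge> s*X*M*L"
  shows "s*T \<ge> N"
proof -
  have "X*(l+1) \<le> X*(L+1)" using lL X1 by simp
  then have k1: "(s*(X-1) - X*(L+1))*N \<le> (s*(X-1) - X*(l+1))*N"
    using N0 by (intro mult_right_mono) auto
  have "N2*l \<le> M*L" using N20 l0 N2M lL by (intro mult_mono) auto
  then have k2: "s*X*(N2*l) \<le> s*X*(M*L)" using s0 X1 by (intro mult_left_mono) auto
  have K: "(s*(X-1) - X*(l+1))*N \<ge> s*X*N2*l" using k1 k2 CI by (simp add: mult.assoc)
  have "s*X*((l+1)*T) \<ge> s*X*(N - N2*l - H)" using A s0 X1 by (intro mult_left_mono) auto
  moreover have "s*(X*H) \<le> s*N" using XH s0 by (intro mult_left_mono) auto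
  ultimately have "X*(l+1)*(s*T) \<ge> s*(X-1)*N - s*X*N2*l"
    by (simp add: algebra_simps)
  then have "X*(l+1)*(s*T) \<ge> X*(l+1)*N" using K by (simp add: algebra_simps)
  moreover have "X*(l+1) > 0" using X1 l0 by simp
  ultimately show ?thesis by (metis mult_le_cancel_left_pos)
qed

definition lt2 :: "nat \<Rightarrow> nat \<Rightarrow> nat" where
  "lt2 n k = nat \<lceil>(real n - 1) / (2 * (real k - 1))\<rceil>"
definition N2t2 :: "nat \<Rightarrow> nat" where
  "N2t2 n = nat \<lceil>real n / 2\<rceil>"

lemma t2_alt: "t2 n k = (\<Sum>i=1..N2t2 n. ((n - i) choose (k - 1)) div (lt2 n k + 1))"
  by (simp add: t2_def lt2_def N2t2_def Let_def)

lemma t2_base: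
  assumes "k \<ge> 1" "n \<ge> 1"
  shows "(lt2 n k + 1) * t2 n k + N2t2 n * lt2 n k + ((n - N2t2 n) choose k) \<ge> (n choose k)"
proof -
  have N2: "n \<le> 2 * N2t2 n" "2 * N2t2 n \<le> n + 1" using N2_bounds[of n] by (auto simp: N2t2_def)
  have N2n: "N2t2 n \<le> n" using N2 assms by linarith
  have "(\<Sum>i=1..N2t2 n. ((n - i) choose (k - 1))) \<le> (lt2 n k + 1) * t2 n k + card {1..N2t2 n} * lt2 n k"
    unfolding t2_alt by (rule sumfloor) simp
  moreover have "(\<Sum>i=1..N2t2 n. ((n - i) choose (k - 1))) + ((n - N2t2 n) choose k) = (n choose k)"
    by (rule hockey[OF assms(1) N2n])
  ultimately show ?thesis by simp
qed

lemma glue: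
  fixes n k s :: nat and X L :: real
  assumes k2: "k \<ge> 2" and n1: "n \<ge> 1" and X1: "X \<ge> 1" and Xk: "X \<le> 2^k"
    and lL: "real (lt2 n k) \<le> L"
    and CI: "(real s*(X-1) - X*(L+1))*real (n choose k) \<ge> real s*X*((real n+1)/2)*L"
  shows "s * t2 n k \<ge> (n choose k)"
proof -
  let ?H = "(n - N2t2 n) choose k"
  have N2: "n \<le> 2 * N2t2 n" "2 * N2t2 n \<le> n + 1" using N2_bounds[of n] by (auto simp: N2t2_def)
  have "2 * (n - N2t2 n) \<le> n" using N2 by linarith
  then have Hb: "2^k * ?H \<le> (n choose k)" by (rule H_bound)
  have "X * real ?H \<le> 2^k * real ?H" using Xk by (intro mult_right_mono) auto
  also have "\<dots> \<le> real (n choose k)" using Hb by (metis of_nat_le_iff of_nat_mult of_nat_numeral of_nat_power)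
  finally have XH: "X * real ?H \<le> real (n choose k)" .
  have B0: "(n choose k) \<le> (lt2 n k + 1) * t2 n k + N2t2 n * lt2 n k + ?H"
    using t2_base[of k n] k2 n1 by simp
  have B1: "real (n choose k) \<le> real ((lt2 n k + 1) * t2 n k + N2t2 n * lt2 n k + ?H)"
    using B0 by (simp only: of_nat_le_iff)
  have "real s * real (t2 n k) \<ge> real (n choose k)"
  proof (rule layer[OF _ XH X1 _ lL _ _ _ _ CI])
    show "(real (lt2 n k) + 1) * real (t2 n k) + real (N2t2 n) * real (lt2 n k) + real ?H \<ge> real (n choose k)"
      using B1 by (simp add: algebra_simps)
    show "real (N2t2 n) \<le> (real n + 1) / 2" using N2 by simp
  qed auto
  then show ?thesis by (simp only: of_nat_mult[symmetric] of_nat_le_iff)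
qed

lemma lt2_le: "k \<ge> 2 \<Longrightarrow> n \<ge> 1 \<Longrightarrow> (2*k - 2) * lt2 n k \<le> n + 2*k - 4"
  unfolding lt2_def by (rule l_bound)

lemma lt2_real: 
  assumes "k \<ge> 2" "n \<ge> 1"
  shows "real (lt2 n k) \<le> (real n + 2*real k - 4) / (2*real k - 2)"
proof -
  have "(2*k - 2) * lt2 n k \<le> n + 2*k - 4" by (rule lt2_le[OF assms])
  then have "real ((2*k - 2) * lt2 n k) \<le> real (n + 2*k - 4)" by (simp only: of_nat_le_iff)
  then have "(2*real k - 2) * real (lt2 n k) \<le> real n + 2*real k - 4" using assms by (simp add: of_nat_diff)
  moreover have "2*real k - 2 > 0" using assms by simp
  ultimately show ?thesis by (simp add: pos_le_divide_eq mult.commute)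
qed

lemma CI_clear:
  fixes S X Nn K NN :: real
  assumes K2: "K \<ge> 2" and H: "2*(S*(X-1)*(2*K-2) - X*(Nn + 4*K - 6))*NN \<ge> S*X*(Nn+1)*(Nn+2*K-4)"
  shows "(S*(X-1) - X*((Nn + 2*K - 4)/(2*K-2)+1))*NN \<ge> S*X*((Nn+1)/2)*((Nn + 2*K - 4)/(2*K-2))"
proof -
  have d: "2*K - 2 > 0" using K2 by simp
  have e1: "(S*(X-1) - X*((Nn + 2*K - 4)/(2*K-2)+1))*NN
      = (S*(X-1)*(2*K-2) - X*(Nn + 4*K - 6))*NN / (2*K-2)"
    using d by (simp add: field_simps)
  have e2: "S*X*((Nn+1)/2)*((Nn + 2*K - 4)/(2*K-2)) = S*X*(Nn+1)*(Nn+2*K-4) / (2*(2*K-2))"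
    using d by (simp add: field_simps)
  define A where "A = S*X*(Nn+1)*(Nn+2*K-4)"
  define Bq where "Bq = (S*(X-1)*(2*K-2) - X*(Nn + 4*K - 6))*NN"
  define d where "d = 2*K-2"
  have H': "A \<le> 2*Bq" using H unfolding A_def Bq_def by (simp only: mult.assoc)
  have "A/(2*d) \<le> (2*Bq)/(2*d)" using H' d unfolding d_def by (intro divide_right_mono) auto
  also have "(2*Bq)/(2*d) = Bq/d" by simp
  finally have F: "A/(2*d) \<le> Bq/d" .
  show ?thesis unfolding e1 e2 using F unfolding A_def Bq_def d_def .
qed

lemma choose3: "6 * (m choose 3) = m * (m - 1) * (m - 2)"
proof -
  have a: "3 * (m choose 3) = m * ((m - 1) choose 2)"
    using binomial_absorption[of 2 m] by (simp add: numeral_3_eq_3)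
  have b: "2 * ((m - 1) choose 2) = (m - 1) * (m - 2)"
    using binomial_absorption[of 1 "m - 1"] by (simp add: numeral_2_eq_2)
  have "6 * (m choose 3) = 2 * (3 * (m choose 3))" by simp
  also have "\<dots> = m * (2 * ((m - 1) choose 2))" unfolding a by simp
  also have "\<dots> = m * (m - 1) * (m - 2)" unfolding b by simp
  finally show ?thesis .
qed

lemma choose4: "24 * (m choose 4) = m * (m - 1) * (m - 2) * (m - 3)"
proof -
  have a: "4 * (m choose 4) = m * ((m - 1) choose 3)"
    using binomial_absorption[of 3 m] by (simp add: numeral_3_eq_3 numeral_Bit0)
  have "24 * (m choose 4) = 6 * (4 * (m choose 4))" by simp
  also have "\<dots> = m * (6 * ((m - 1) choose 3))" unfolding a by simp
  also have "\<dots> = m * ((m - 1) * (m - 1 - 1) * (m - 1 - 2))" unfolding choose3 by simp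
  also have "\<dots> = m * (m - 1) * (m - 2) * (m - 3)" by (simp add: mult.assoc numeral_2_eq_2 numeral_3_eq_3)
  finally show ?thesis .
qed

lemma lin_exp: "j + 1 \<le> (2::nat)^j"
  using less_exp[of j] by (simp add: Suc_le_eq)

lemma powC:
  fixes s k :: nat
  assumes s7: "s \<ge> 7" and k5: "k \<ge> 5"
  shows "2*k*(s+1)*(s+3) \<le> s^(k-1)"
proof -
  obtain j where j: "k = j + 5" using k5 by (metis add.commute le_Suc_ex)
  have kj: "k \<le> 5 * 2^j" using lin_exp[of j] j by simp
  have "(2::nat)^j \<le> s^j" using s7 by (intro power_mono) auto
  then have kj2: "k \<le> 5 * s^j" using kj by simp
  have ss: "s*s \<ge> 7*s" using s7 by simp
  have "10*(s+1)*(s+3) = 10*(s*s) + 40*s + 30" by (simp add: algebra_simps)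
  also have "\<dots> \<le> 49*(s*s)" using ss s7 by linarith
  also have "\<dots> \<le> (s*s)*(s*s)"
  proof -
    have "49 \<le> s*s" using ss s7 by linarith
    then show ?thesis by (intro mult_right_mono) auto
  qed
  finally have s4: "10*(s+1)*(s+3) \<le> s^4" by (simp add: power4_eq_xxxx mult.assoc)
  have "2*k*(s+1)*(s+3) \<le> 2*(5*s^j)*(s+1)*(s+3)" using kj2 by (intro mult_right_mono) auto
  also have "\<dots> = (10*(s+1)*(s+3)) * s^j" by (simp add: algebra_simps)
  also have "\<dots> \<le> s^4 * s^j" using s4 by (intro mult_right_mono) auto
  also have "\<dots> = s^(k-1)" using j by (simp add: power_add)
  finally show ?thesis .
qed

lemma powD:
  fixes k :: nat
  assumes k7: "k \<ge> 7"
  shows "931*k \<le> 6^k"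
proof -
  obtain j where j: "k = j + 7" using k7 by (metis add.commute le_Suc_ex)
  have "(2::nat)^j \<le> 6^j" by (intro power_mono) auto
  then have "k \<le> 7 * 6^j" using lin_exp[of j] j by simp
  then have "931*k \<le> 931*(7*6^j)" by simp
  also have "\<dots> \<le> 6^7 * 6^j" by simp
  also have "\<dots> = 6^k" using j by (simp add: power_add)
  finally show ?thesis .
qed

lemma polyA:
  fixes S :: real assumes "S \<ge> 19"
  shows "(4*S-64)*S*(9*S*S-1) - 8*S*(3*S+3)*(3*S+4) \<ge> 0"
proof -
  define u where "u = S - 19"
  have u0: "u \<ge> 0" using assms by (simp add: u_def)
  have S: "S = u + 19" by (simp add: u_def)
  have e: "(4*S-64)*S*(9*S*S-1) - 8*S*(3*S+3)*(3*S+4) = 36*u^4 + 2088*u^3 + 40868*u^2 + 279344*u + 184224"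
    unfolding S by (simp add: algebra_simps eval_nat_numeral)
  have "0 \<le> 36*u^4 + 2088*u^3 + 40868*u^2 + 279344*u + 184224" using u0 by simp
  then show ?thesis using e by simp
qed

lemma polyB:
  fixes S :: real assumes "S \<ge> 9"
  shows "2*(26*S-208)*S^4 - 16*S*(4*S+4)*(4*S+7) \<ge> 0"
proof -
  define u where "u = S - 9"
  have u0: "u \<ge> 0" using assms by (simp add: u_def)
  have S: "S = u + 9" by (simp add: u_def)
  have e: "2*(26*S-208)*S^4 - 16*S*(4*S+4)*(4*S+7) = 52*u^5 + 1924*u^4 + 26888*u^3 + 169288*u^2 + 417476*u + 93492"
    unfolding S by (simp add: algebra_simps eval_nat_numeral)
  have "0 \<le> 52*u^5 + 1924*u^4 + 26888*u^3 + 169288*u^2 + 417476*u + 93492" using u0 by simp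
  then show ?thesis using e by simp
qed

lemma caseA:
  fixes s r n k :: nat
  assumes k: "k = 3" and n: "n = s*k + r" and r1: "1 \<le> r" and r2: "r \<le> 2" and s19: "s \<ge> 19"
  shows "2*(real s*(8-1)*(2*real k-2) - 8*(real n + 4*real k - 6))*real (n choose k)
    \<ge> real s*8*(real n+1)*(real n+2*real k-4)"
proof -
  define S where "S = real s"
  define Nn where "Nn = real n"
  define NN where "NN = real (n choose 3)"
  have S19: "S \<ge> 19" using s19 by (simp add: S_def)
  have nle: "Nn \<le> 3*S + 2" "Nn \<ge> 3*S + 1" using n r1 r2 k by (auto simp: S_def Nn_def)
  have E: "S*7*4 - 8*(Nn + 6) \<ge> 4*S - 64" using nle by (simp add: algebra_simps; linarith)
  have E0: "4*S - 64 \<ge> 0" using S19 by linarith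
  define N0 where "N0 = real ((3*s+1) choose 3)"
  have "real (6 * ((3*s+1) choose 3)) = real ((3*s+1) * (3*s+1-1) * (3*s+1-2))"
    by (simp only: choose3)
  moreover have "real ((3*s+1) * (3*s+1-1) * (3*s+1-2)) = (3*S+1)*(3*S)*(3*S-1)"
    using s19 by (simp add: S_def of_nat_diff algebra_simps)
  ultimately have N0v: "N0 = (3*S+1)*(3*S)*(3*S-1)/6" unfolding N0_def by simp
  have NNge: "NN \<ge> N0" unfolding NN_def N0_def using n r1 k by (simp add: binomial_right_mono)
  have N00: "N0 \<ge> 0" by (simp add: N0_def)
  have step1: "2*(S*7*4 - 8*(Nn + 6))*NN \<ge> 2*(4*S-64)*N0"
    using E E0 NNge N00 by (intro mult_left_mono mult_mono) auto
  have poly: "2*(4*S-64)*N0 \<ge> 8*S*(3*S+3)*(3*S+4)"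
  proof -
    have "2*(4*S-64)*N0 = (4*S-64)*S*(9*S*S-1)" unfolding N0v by (simp add: field_simps)
    then show ?thesis using polyA[OF S19] by simp
  qed
  have R: "S*8*(Nn+1)*(Nn+2) \<le> 8*S*(3*S+3)*(3*S+4)"
  proof -
    have "(Nn+1)*(Nn+2) \<le> (3*S+3)*(3*S+4)" using nle S19 by (intro mult_mono) auto
    then have "(8*S)*((Nn+1)*(Nn+2)) \<le> (8*S)*((3*S+3)*(3*S+4))" using S19 by (intro mult_left_mono) auto
    then show ?thesis by (simp add: algebra_simps)
  qed
  have "S*8*(Nn+1)*(Nn+2) \<le> 2*(S*7*4 - 8*(Nn + 6))*NN" using step1 poly R by linarith
  then show ?thesis using k by (simp add: S_def Nn_def NN_def algebra_simps)
qed

lemma caseB: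
  fixes s r n k :: nat
  assumes k: "k = 4" and n: "n = s*k + r" and r2: "r \<le> 3" and s9: "s \<ge> 9"
  shows "2*(real s*(16-1)*(2*real k-2) - 16*(real n + 4*real k - 6))*real (n choose k)
    \<ge> real s*16*(real n+1)*(real n+2*real k-4)"
proof -
  define S where "S = real s"
  define Nn where "Nn = real n"
  define NN where "NN = real (n choose 4)"
  have S9: "S \<ge> 9" using s9 by (simp add: S_def)
  have nle: "Nn \<le> 4*S + 3" "Nn \<ge> 4*S" using n r2 k by (auto simp: S_def Nn_def)
  have E: "S*15*6 - 16*(Nn + 10) \<ge> 26*S - 208" using nle by (simp add: algebra_simps; linarith)
  have E0: "26*S - 208 \<ge> 0" using S9 by linarith
  have n4: "4 \<le> n" using n k s9 by simp
  have "(real n / real (4::nat))^4 \<le> real (n choose 4)"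
    by (rule binomial_ge_n_over_k_pow_k) (use n4 in simp)
  then have "(Nn / 4)^4 \<le> NN" by (simp add: Nn_def NN_def)
  moreover have "S^4 \<le> (Nn/4)^4" using nle S9 by (intro power_mono) auto
  ultimately have NNge: "NN \<ge> S^4" by linarith
  have step1: "2*(S*15*6 - 16*(Nn + 10))*NN \<ge> 2*(26*S-208)*S^4"
    using E E0 NNge by (intro mult_left_mono mult_mono) auto
  have poly: "2*(26*S-208)*S^4 \<ge> 16*S*(4*S+4)*(4*S+7)" using polyB[OF S9] by simp
  have R: "S*16*(Nn+1)*(Nn+4) \<le> 16*S*(4*S+4)*(4*S+7)"
  proof -
    have "(Nn+1)*(Nn+4) \<le> (4*S+4)*(4*S+7)" using nle S9 by (intro mult_mono) auto
    then have "(16*S)*((Nn+1)*(Nn+4)) \<le> (16*S)*((4*S+4)*(4*S+7))" using S9 by (intro mult_left_mono) auto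
    then show ?thesis by (simp add: algebra_simps)
  qed
  have "S*16*(Nn+1)*(Nn+4) \<le> 2*(S*15*6 - 16*(Nn + 10))*NN" using step1 poly R by linarith
  then show ?thesis using k by (simp add: S_def Nn_def NN_def algebra_simps)
qed

lemma NN_pow:
  fixes s n k :: nat
  assumes "s * k \<le> n" "k \<ge> 1" "s \<ge> 1"
  shows "real s ^ k \<le> real (n choose k)"
proof -
  have "k \<le> s * k" using assms(3) by simp
  then have kn: "k \<le> n" using assms(1) by linarith
  have "(real n / real k)^k \<le> real (n choose k)" by (rule binomial_ge_n_over_k_pow_k) (rule kn)
  moreover have "real s \<le> real n / real k"
  proof -
    have "real s * real k \<le> real n" using assms(1) by (metis of_nat_le_iff of_nat_mult)
    then show ?thesis using assms(2) by (simp add: pos_le_divide_eq)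
  qed
  then have "real s ^ k \<le> (real n / real k)^k" by (intro power_mono) auto
  ultimately show ?thesis by linarith
qed

lemma caseC:
  fixes s r n k :: nat
  assumes k5: "k \<ge> 5" and n: "n = s*k + r" and r2: "r \<le> k - 1" and s7: "s \<ge> 7"
  shows "2*(real s*(32-1)*(2*real k-2) - 32*(real n + 4*real k - 6))*real (n choose k)
    \<ge> real s*32*(real n+1)*(real n+2*real k-4)"
proof -
  define S where "S = real s"
  define K where "K = real k"
  define Nn where "Nn = real n"
  define NN where "NN = real (n choose k)"
  have S7: "S \<ge> 7" using s7 by (simp add: S_def)
  have K5: "K \<ge> 5" using k5 by (simp add: K_def)
  have nle: "Nn \<le> S*K + K - 1" "Nn \<ge> S*K"
  proof -
    have "real r \<le> real k - 1" using r2 k5 by (simp add: of_nat_diff)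
    then show "Nn \<le> S*K + K - 1" "Nn \<ge> S*K" using n by (auto simp: S_def K_def Nn_def)
  qed
  have Nn0: "Nn \<ge> 0" by (simp add: Nn_def)
  have m1: "S*(30*K - 62) \<ge> 7*(30*K - 62)" using S7 K5 by (intro mult_right_mono) auto
  have E: "S*(32-1)*(2*K-2) - 32*(Nn + 4*K - 6) \<ge> 8*K"
  proof -
    have e: "S*(32-1)*(2*K-2) - 32*(Nn + 4*K - 6) = 62*(S*K) - 62*S - 32*Nn - 128*K + 192"
      by (simp add: algebra_simps)
    have m1': "30*(S*K) - 62*S \<ge> 210*K - 434" using m1 by (simp add: algebra_simps)
    show ?thesis unfolding e using m1' nle K5 by linarith
  qed
  have NNge: "NN \<ge> S^k" unfolding NN_def S_def using NN_pow[of s k n] n k5 s7 by simp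
  have S0: "S \<ge> 0" using S7 by simp
  have step1: "2*(S*(32-1)*(2*K-2) - 32*(Nn + 4*K - 6))*NN \<ge> 2*(8*K)*S^k"
    using E NNge K5 S0 by (intro mult_left_mono mult_mono) auto
  have pw: "2*K*(S+1)*(S+3) \<le> S^(k-1)"
  proof -
    have "real (2*k*(s+1)*(s+3)) \<le> real (s^(k-1))" using powC[OF s7 k5] by (simp only: of_nat_le_iff)
    then show ?thesis by (simp add: S_def K_def algebra_simps)
  qed
  obtain j where j: "k = Suc j" using k5 by (cases k) auto
  have Sk: "S^k = S * S^(k-1)" by (simp add: j)
  have poly: "2*(8*K)*S^k \<ge> S*32*(K*(S+1))*(K*(S+3))"
  proof -
    have "2*(8*K)*S^k = (16*K*S) * S^(k-1)" unfolding Sk by (simp add: algebra_simps)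
    moreover have "(16*K*S) * (2*K*(S+1)*(S+3)) \<le> (16*K*S) * S^(k-1)"
      using pw K5 S0 by (intro mult_left_mono) auto
    moreover have "(16*K*S) * (2*K*(S+1)*(S+3)) = S*32*(K*(S+1))*(K*(S+3))" by (simp add: algebra_simps)
    ultimately show ?thesis by linarith
  qed
  have R: "S*32*(Nn+1)*(Nn+2*K-4) \<le> S*32*(K*(S+1))*(K*(S+3))"
  proof -
    have a: "Nn + 1 \<le> K*(S+1)" using nle by (simp add: algebra_simps)
    have b: "Nn + 2*K - 4 \<le> K*(S+3)" using nle K5 by (simp add: algebra_simps)
    have "(Nn+1)*(Nn+2*K-4) \<le> (K*(S+1))*(K*(S+3))"
      using a b nle K5 S0 Nn0 by (intro mult_mono) (auto simp: algebra_simps)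
    then have "(S*32)*((Nn+1)*(Nn+2*K-4)) \<le> (S*32)*((K*(S+1))*(K*(S+3)))" using S0 by (intro mult_left_mono) auto
    then show ?thesis by (simp add: algebra_simps)
  qed
  have "S*32*(Nn+1)*(Nn+2*K-4) \<le> 2*(S*(32-1)*(2*K-2) - 32*(Nn + 4*K - 6))*NN"
    using step1 poly R by linarith
  then show ?thesis by (simp add: S_def K_def Nn_def NN_def)
qed

lemma caseD:
  fixes s r n k :: nat
  assumes k7: "k \<ge> 7" and n: "n = s*k + r" and r2: "r \<le> k - 1" and s6: "s = 6"
  shows "2*(real s*(128-1)*(2*real k-2) - 128*(real n + 4*real k - 6))*real (n choose k)
    \<ge> real s*128*(real n+1)*(real n+2*real k-4)"
proof -
  define K where "K = real k"
  define Nn where "Nn = real n"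
  define NN where "NN = real (n choose k)"
  have K7: "K \<ge> 7" using k7 by (simp add: K_def)
  have nle: "Nn \<le> 7*K - 1" "Nn \<ge> 6*K"
  proof -
    have "real r \<le> real k - 1" using r2 k7 by (simp add: of_nat_diff)
    then show "Nn \<le> 7*K - 1" "Nn \<ge> 6*K" using n s6 by (auto simp: K_def Nn_def)
  qed
  have e: "6*(128-1)*(2*K-2) - 128*(Nn + 4*K - 6) = 1524*K - 1524 - 128*Nn - 512*K + 768"
    by (simp add: algebra_simps)
  have E: "6*(128-1)*(2*K-2) - 128*(Nn + 4*K - 6) \<ge> 26*K" unfolding e using nle K7 by linarith
  have NNge: "NN \<ge> 6^k" unfolding NN_def using NN_pow[of s k n] n s6 k7 by simp
  have step1: "2*(6*(128-1)*(2*K-2) - 128*(Nn + 4*K - 6))*NN \<ge> 2*(26*K)*6^k"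
    using E NNge K7 by (intro mult_left_mono mult_mono) auto
  have pw: "931*K \<le> 6^k"
  proof -
    have "real (931*k) \<le> real ((6::nat)^k)" using powD[OF k7] by (simp only: of_nat_le_iff)
    then show ?thesis by (simp add: K_def)
  qed
  have poly: "2*(26*K)*6^k \<ge> 768*(7*K)*(9*K)"
  proof -
    have a: "(52*K)*(931*K) \<le> (52*K)*6^k" using pw K7 by (intro mult_left_mono) auto
    have b1: "(52*K)*(931*K) = 48412*(K*K)" by (simp add: algebra_simps)
    have b2: "768*(7*K)*(9*K) = 48384*(K*K)" by (simp add: algebra_simps)
    have b3: "2*(26*K)*6^k = (52*K)*6^k" by (simp add: algebra_simps)
    have "K*K \<ge> 0" by simp
    then show ?thesis using a b1 b2 b3 by linarith
  qed
  have R: "6*128*(Nn+1)*(Nn+2*K-4) \<le> 768*(7*K)*(9*K)"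
  proof -
    have "(Nn+1)*(Nn+2*K-4) \<le> (7*K)*(9*K)"
      using nle K7 by (intro mult_mono) auto
    then show ?thesis by (simp add: algebra_simps)
  qed
  have "6*128*(Nn+1)*(Nn+2*K-4) \<le> 2*(6*(128-1)*(2*K-2) - 128*(Nn + 4*K - 6))*NN"
    using step1 poly R by linarith
  then show ?thesis using s6 by (simp add: K_def Nn_def NN_def)
qed

lemma finite_case:
  fixes n k s Lc :: nat
  assumes k2: "k \<ge> 2" and n1: "n \<ge> 1" and lc: "n + 2*k - 4 < (2*k - 2) * (Lc + 1)"
    and CI: "(real s*(2^k-1) - 2^k*(real Lc+1))*real (n choose k) \<ge> real s*2^k*((real n+1)/2)*real Lc"
  shows "s * t2 n k \<ge> (n choose k)"
proof -
  have "(2*k-2) * lt2 n k \<le> n + 2*k - 4" by (rule lt2_le[OF k2 n1])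
  then have "(2*k-2) * lt2 n k < (2*k-2)*(Lc+1)" using lc by linarith
  then have "lt2 n k < Lc + 1" by (simp only: mult_less_cancel1)
  then have lL: "real (lt2 n k) \<le> real Lc" by simp
  show ?thesis by (rule glue[OF k2 n1 _ _ lL CI]) auto
qed

lemma gen_glue:
  fixes n k s :: nat and X :: real
  assumes k2: "k \<ge> 2" and n1: "n \<ge> 1" and X1: "X \<ge> 1" and Xk: "X \<le> 2^k"
    and H: "2*(real s*(X-1)*(2*real k-2) - X*(real n + 4*real k - 6))*real (n choose k)
      \<ge> real s*X*(real n+1)*(real n+2*real k-4)"
  shows "s * t2 n k \<ge> (n choose k)"
proof -
  have K2: "real k \<ge> 2" using k2 by simp
  have CI: "(real s*(X-1) - X*((real n + 2*real k - 4)/(2*real k-2)+1))*real (n choose k)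
      \<ge> real s*X*((real n+1)/2)*((real n + 2*real k - 4)/(2*real k-2))"
    by (rule CI_clear[OF K2 H])
  show ?thesis by (rule glue[OF k2 n1 X1 Xk lt2_real[OF k2 n1] CI])
qed

lemma fc_52: "17 * t2 52 3 \<ge> (52 choose 3)"
proof -
  have c: "(52::nat) choose 3 = 22100" using choose3[of 52] by simp
  show ?thesis by (rule finite_case[where Lc=13]) (simp_all add: c)
qed

lemma fc_53: "17 * t2 53 3 \<ge> (53 choose 3)"
proof -
  have c: "(53::nat) choose 3 = 23426" using choose3[of 53] by simp
  show ?thesis by (rule finite_case[where Lc=13]) (simp_all add: c)
qed

lemma fc_55: "18 * t2 55 3 \<ge> (55 choose 3)"
proof -
  have c: "(55::nat) choose 3 = 26235" using choose3[of 55] by simp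
  show ?thesis by (rule finite_case[where Lc=14]) (simp_all add: c)
qed

lemma fc_56: "18 * t2 56 3 \<ge> (56 choose 3)"
proof -
  have c: "(56::nat) choose 3 = 27720" using choose3[of 56] by simp
  show ?thesis by (rule finite_case[where Lc=14]) (simp_all add: c)
qed

lemma fc_29: "7 * t2 29 4 \<ge> (29 choose 4)"
proof -
  have c: "(29::nat) choose 4 = 23751" using choose4[of 29] by simp
  show ?thesis by (rule finite_case[where Lc=5]) (simp_all add: c)
qed

lemma fc_30: "7 * t2 30 4 \<ge> (30 choose 4)"
proof -
  have c: "(30::nat) choose 4 = 27405" using choose4[of 30] by simp
  show ?thesis by (rule finite_case[where Lc=5]) (simp_all add: c)
qed

lemma fc_31: "7 * t2 31 4 \<ge> (31 choose 4)"
proof -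
  have c: "(31::nat) choose 4 = 31465" using choose4[of 31] by simp
  show ?thesis by (rule finite_case[where Lc=5]) (simp_all add: c)
qed

lemma fc_33: "8 * t2 33 4 \<ge> (33 choose 4)"
proof -
  have c: "(33::nat) choose 4 = 40920" using choose4[of 33] by simp
  show ?thesis by (rule finite_case[where Lc=6]) (simp_all add: c)
qed

lemma fc_34: "8 * t2 34 4 \<ge> (34 choose 4)"
proof -
  have c: "(34::nat) choose 4 = 46376" using choose4[of 34] by simp
  show ?thesis by (rule finite_case[where Lc=6]) (simp_all add: c)
qed

lemma fc_35: "8 * t2 35 4 \<ge> (35 choose 4)"
proof -
  have c: "(35::nat) choose 4 = 52360" using choose4[of 35] by simp
  show ?thesis by (rule finite_case[where Lc=6]) (simp_all add: c)
qed

theorem lemma4p2: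
  fixes n s k r :: nat
  assumes "n = s * k + r" and "s \<ge> 2" and "k \<ge> 3" and "1 \<le> r" and "r \<le> k - 1"
    and "(k \<ge> 4 \<and> s \<ge> 7) \<or> (k = 3 \<and> s \<ge> 17) \<or> (k \<ge> 7 \<and> s = 6)"
  shows "t2 n k \<ge> chi_compl_kneser n k"
proof -
  note n = assms(1) and s2 = assms(2) and k3 = assms(3) and r1 = assms(4) and rk = assms(5)
    and cs = assms(6)
  have s1: "s \<ge> 1" using s2 by simp
  have sk: "s * k \<le> n" using n by simp
  have k2: "k \<ge> 2" using k3 by simp
  have n1: "n \<ge> 1" using n r1 by simp
  have main: "s * t2 n k \<ge> (n choose k)"
  proof (cases "k = 3")
    case True
    then have s17: "s \<ge> 17" using cs by auto
    have r2: "r \<le> 2" using rk True by simp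
    show ?thesis
    proof (cases "s \<ge> 19")
      case True
      show ?thesis
        by (rule gen_glue[OF k2 n1 _ _ caseA[OF \<open>k = 3\<close> n r1 r2 True]]) (use \<open>k = 3\<close> in simp_all)
    next
      case False
      then have "s = 17 \<or> s = 18" using s17 by linarith
      moreover have "r = 1 \<or> r = 2" using r1 r2 by linarith
      ultimately have "(s = 17 \<and> n = 52) \<or> (s = 17 \<and> n = 53) \<or> (s = 18 \<and> n = 55) \<or> (s = 18 \<and> n = 56)"
        using n \<open>k = 3\<close> by auto
      then show ?thesis using \<open>k = 3\<close> fc_52 fc_53 fc_55 fc_56 by auto
    qed
  next
    case k_ne3: False
    show ?thesis
    proof (cases "k = 4")
      case True
      then have s7: "s \<ge> 7" using cs by auto
      have r3: "r \<le> 3" using rk True by simp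
      show ?thesis
      proof (cases "s \<ge> 9")
        case True
        show ?thesis
          by (rule gen_glue[OF k2 n1 _ _ caseB[OF \<open>k = 4\<close> n r3 True]]) (use \<open>k = 4\<close> in simp_all)
      next
        case False
        then have "s = 7 \<or> s = 8" using s7 by linarith
        moreover have "r = 1 \<or> r = 2 \<or> r = 3" using r1 r3 by linarith
        ultimately have "(s = 7 \<and> (n = 29 \<or> n = 30 \<or> n = 31)) \<or> (s = 8 \<and> (n = 33 \<or> n = 34 \<or> n = 35))"
          using n \<open>k = 4\<close> by auto
        then show ?thesis using \<open>k = 4\<close> fc_29 fc_30 fc_31 fc_33 fc_34 fc_35 by auto
      qed
    next
      case False
      then have k5: "k \<ge> 5" using k_ne3 k3 by linarith
      show ?thesis
      proof (cases "s \<ge> 7")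
        case True
        have X: "(32::real) \<le> 2^k"
        proof -
          have "(2::real)^5 \<le> 2^k" using k5 by (intro power_increasing) auto
          then show ?thesis by simp
        qed
        show ?thesis
          by (rule gen_glue[OF k2 n1 _ X caseC[OF k5 n rk True]]) simp
      next
        case False
        then have s6: "s = 6" and k7: "k \<ge> 7" using cs by auto
        have X: "(128::real) \<le> 2^k"
        proof -
          have "(2::real)^7 \<le> 2^k" using k7 by (intro power_increasing) auto
          then show ?thesis by simp
        qed
        show ?thesis
          by (rule gen_glue[OF k2 n1 _ X caseD[OF k7 n rk s6]]) simp
      qed
    qed
  qed
  have N1: "(n choose k) \<ge> 1"
  proof -
    have "k \<le> n" using sk s1 by (metis le_trans mult_le_mono1 mult_1)
    then show ?thesis by (simp add: Suc_leI)
  qed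
  have "((n choose k) - 1) div s < t2 n k"
  proof -
    have "(n choose k) - 1 < t2 n k * s" using main N1 by (simp add: mult.commute)
    then show ?thesis using s1 by (simp add: div_less_iff_less_mult)
  qed
  then have "((n choose k) - 1) div s + 1 \<le> t2 n k" by simp
  moreover have "chi_compl_kneser n k \<le> ((n choose k) - 1) div s + 1" by (rule chi_le[OF s1 sk])
  ultimately show ?thesis by linarith
qed

end
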